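(* For every Lie–Leibniz triple $(\mathfrak g,V,\Theta)$, the Lie superalgebra $L=L(\mathfrak g,V,\Theta)$ is $(-2,2)$-transitive.
   Context: Ground field $\mathbb{K}=\mathbb{R}$ or $\mathbb{C}$; all spaces $\mathbb{Z}$-graded with parity equal to degree mod 2; subalgebras and ideals are graded. $G_\pm=\bigoplus_{k\ge1}G_{\pm k}$, $G_{m-}=\bigoplus_{k\le m}G_k$, $G_{n+}=\bigoplus_{k\ge n}G_k$. A Lie superalgebra $G$ is $(m,n)$-transitive if for $x\in G_{n+}$, $[G_-,x]=0$ implies $x=0$, and for $x\in G_{m-}$, $[G_+,x]=0$ implies $x=0$. A Lie–Leibniz triple $(\mathfrak g,V,\Theta)$ consists of a Lie algebra $\mathfrak g$, a $\mathfrak g$-module $V$ (action $x\cdot u$) and a linear map $\Theta:V\to\mathfrak g$ with $\Theta(\Theta(u)\cdot v)=[\Theta(u),\Theta(v)]$ for all $u,v$. Construction of $\mathbb U$: $\mathbb U_0=\mathfrak g$, $\mathbb U_1=V[-1]$ ($V$ in degree 1, odd), $\mathbb U_{-p+1}=\mathrm{Hom}(\mathbb U_1,\mathbb U_{-p+2})$ for $p\ge2$; brackets on $\mathbb U_{1-}$: Lie bracket on $\mathfrak g$, and recursively $[x,u]=x(u)$, $[u,x]=-(-1)^{|x|}x(u)$, $[x,y](u)=[x,y(u)]+(-1)^{|y|}[x(u),y]$ for $x,y\in\mathbb U_{0-}$, $u\in\mathbb U_1$, where $x(u)=x\cdot u$ for $x\in\mathfrak g$; $\mathbb U$ is the unique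 Lie superalgebra extending this semilocal Lie superalgebra with $\mathbb U_+$ free on $\mathbb U_1$. $\Theta$ is regarded as an element of $\mathbb U_{-1}$; $R_\Theta\subseteq\mathbb U_{-1}$ is the $\mathfrak g$-submodule generated by $\Theta$ under $x\cdot\phi=[x,\phi]$. Let $\sigma:\mathbb U_2\to\mathbb U_1$ be linear with $\sigma([u,v])=\tfrac12(\Theta(u)\cdot v+\Theta(v)\cdot u)$, and $K$ the sum of all $\mathfrak g$-submodules of $\mathbb U_2$ contained in $\ker\sigma$. Construction of $L$: let $\mathbb S$ be the subalgebra of $\mathbb U$ generated by $R_\Theta\oplus\mathfrak g\oplus\mathbb U_1$; let $\mathscr K$ be the ideal of $\mathbb S$ generated by $K$ (it is contained in $\mathbb U_{2+}$); $\mathbb T=\mathbb S/\mathscr K$; and $L(\mathfrak g,V,\Theta)=\mathbb T/J$, where $J$ is the sum of all ideals of $\mathbb T$ contained in $\mathbb T_{3+}$. *)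

theory Defs
  imports Complex_Main
begin

definition field_is_R_or_C :: "'k::field itself \<Rightarrow> bool" where
  "field_is_R_or_C _ \<longleftrightarrow>
     (\<exists>f::'k \<Rightarrow> real. bij f \<and> (\<forall>a b. f (a + b) = f a + f b \<and> f (a * b) = f a * f b)) \<or>
     (\<exists>f::'k \<Rightarrow> complex. bij f \<and> (\<forall>a b. f (a + b) = f a + f b \<and> f (a * b) = f a * f b))"

definition bilin :: "('k::field \<Rightarrow> 'a::ab_group_add \<Rightarrow> 'a) \<Rightarrow> ('k \<Rightarrow> 'b::ab_group_add \<Rightarrow> 'b)
     \<Rightarrow> ('k \<Rightarrow> 'c::ab_group_add \<Rightarrow> 'c) \<Rightarrow> ('a \<Rightarrow> 'b \<Rightarrow> 'c) \<Rightarrow> bool" where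
  "bilin s1 s2 s3 f \<longleftrightarrow> (\<forall>x. Vector_Spaces.linear s2 s3 (f x)) \<and> (\<forall>y. Vector_Spaces.linear s1 s3 (\<lambda>x. f x y))"

definition lie_algebra :: "('k::field \<Rightarrow> 'g::ab_group_add \<Rightarrow> 'g) \<Rightarrow> ('g \<Rightarrow> 'g \<Rightarrow> 'g) \<Rightarrow> bool" where
  "lie_algebra sg bg \<longleftrightarrow> vector_space sg \<and> bilin sg sg sg bg \<and> (\<forall>x. bg x x = 0) \<and>
     (\<forall>x y z. bg x (bg y z) + bg y (bg z x) + bg z (bg x y) = 0)"

definition lie_module :: "('k::field \<Rightarrow> 'g::ab_group_add \<Rightarrow> 'g) \<Rightarrow> ('g \<Rightarrow> 'g \<Rightarrow> 'g)
     \<Rightarrow> ('k \<Rightarrow> 'v::ab_group_add \<Rightarrow> 'v) \<Rightarrow> ('g \<Rightarrow> 'v \<Rightarrow> 'v) \<Rightarrow> bool" where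
  "lie_module sg bg sv act \<longleftrightarrow> lie_algebra sg bg \<and> vector_space sv \<and> bilin sg sv sv act \<and>
     (\<forall>x y u. act (bg x y) u = act x (act y u) - act y (act x u))"

definition lie_leibniz_triple :: "('k::field \<Rightarrow> 'g::ab_group_add \<Rightarrow> 'g) \<Rightarrow> ('g \<Rightarrow> 'g \<Rightarrow> 'g)
     \<Rightarrow> ('k \<Rightarrow> 'v::ab_group_add \<Rightarrow> 'v) \<Rightarrow> ('g \<Rightarrow> 'v \<Rightarrow> 'v) \<Rightarrow> ('v \<Rightarrow> 'g) \<Rightarrow> bool" where
  "lie_leibniz_triple sg bg sv act Th \<longleftrightarrow> lie_module sg bg sv act \<and> Vector_Spaces.linear sv sg Th \<and>
     (\<forall>u v. Th (act (Th u) v) = bg (Th u) (Th v))"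

section \<open>Z-graded Lie superalgebras (parity = degree mod 2)\<close>

text \<open>The whole type 'u is the superalgebra; Gr k is its homogeneous component of degree k.\<close>

definition psign :: "int \<Rightarrow> 'u::ab_group_add \<Rightarrow> 'u" where
  "psign n x = (if even n then x else - x)"

definition graded_lie_superalgebra :: "('k::field \<Rightarrow> 'u::ab_group_add \<Rightarrow> 'u) \<Rightarrow> ('u \<Rightarrow> 'u \<Rightarrow> 'u)
     \<Rightarrow> (int \<Rightarrow> 'u set) \<Rightarrow> bool" where
  "graded_lie_superalgebra su bu Gr \<longleftrightarrow>
     vector_space su \<and> (\<forall>k. module.subspace su (Gr k)) \<and>
     (\<forall>x. \<exists>!c::int \<Rightarrow> 'u. finite {k. c k \<noteq> 0} \<and> (\<forall>k. c k \<in> Gr k) \<and> x = (\<Sum>k\<in>{k. c k \<noteq> 0}. c k)) \<and>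
     bilin su su su bu \<and>
     (\<forall>i j x y. x \<in> Gr i \<longrightarrow> y \<in> Gr j \<longrightarrow> bu x y \<in> Gr (i + j)) \<and>
     (\<forall>i j x y. x \<in> Gr i \<longrightarrow> y \<in> Gr j \<longrightarrow> bu x y = - psign (i * j) (bu y x)) \<and>
     (\<forall>i j x y z. x \<in> Gr i \<longrightarrow> y \<in> Gr j \<longrightarrow>
        bu x (bu y z) = bu (bu x y) z + psign (i * j) (bu y (bu x z)))"

definition deg_ge :: "('k::field \<Rightarrow> 'u::ab_group_add \<Rightarrow> 'u) \<Rightarrow> (int \<Rightarrow> 'u set) \<Rightarrow> int \<Rightarrow> 'u set" where
  "deg_ge su Gr n = module.span su (\<Union>k\<in>{n..}. Gr k)"

definition deg_le :: "('k::field \<Rightarrow> 'u::ab_group_add \<Rightarrow> 'u) \<Rightarrow> (int \<Rightarrow> 'u set) \<Rightarrow> int \<Rightarrow> 'u set" where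
  "deg_le su Gr m = module.span su (\<Union>k\<in>{..m}. Gr k)"

definition gen_subalg :: "('k::field \<Rightarrow> 'u::ab_group_add \<Rightarrow> 'u) \<Rightarrow> ('u \<Rightarrow> 'u \<Rightarrow> 'u) \<Rightarrow> 'u set \<Rightarrow> 'u set" where
  "gen_subalg su bu X = \<Inter>{W. module.subspace su W \<and> X \<subseteq> W \<and> (\<forall>a\<in>W. \<forall>b\<in>W. bu a b \<in> W)}"

definition gen_ideal :: "('k::field \<Rightarrow> 'u::ab_group_add \<Rightarrow> 'u) \<Rightarrow> ('u \<Rightarrow> 'u \<Rightarrow> 'u) \<Rightarrow> 'u set \<Rightarrow> 'u set \<Rightarrow> 'u set" where
  "gen_ideal su bu S X = \<Inter>{I. module.subspace su I \<and> X \<subseteq> I \<and> (\<forall>s\<in>S. \<forall>a\<in>I. bu s a \<in> I)}"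

definition graded_set :: "('k::field \<Rightarrow> 'u::ab_group_add \<Rightarrow> 'u) \<Rightarrow> (int \<Rightarrow> 'u set) \<Rightarrow> 'u set \<Rightarrow> bool" where
  "graded_set su Gr I \<longleftrightarrow> I \<subseteq> module.span su (\<Union>k. I \<inter> Gr k)"

definition graded_ideal :: "('k::field \<Rightarrow> 'u::ab_group_add \<Rightarrow> 'u) \<Rightarrow> ('u \<Rightarrow> 'u \<Rightarrow> 'u) \<Rightarrow> (int \<Rightarrow> 'u set)
     \<Rightarrow> 'u set \<Rightarrow> 'u set \<Rightarrow> bool" where
  "graded_ideal su bu Gr S I \<longleftrightarrow> module.subspace su I \<and> I \<subseteq> S \<and> graded_set su Gr I \<and>
     (\<forall>s\<in>S. \<forall>a\<in>I. bu s a \<in> I)"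

text \<open>(m,n)-transitivity of the quotient S/I of a graded subalgebra S by a graded ideal I,
  written out on representatives: the class of x is 0 iff x is in I; [y,x] = 0 in S/I iff bu y x is in I.\<close>
definition quot_transitive :: "('k::field \<Rightarrow> 'u::ab_group_add \<Rightarrow> 'u) \<Rightarrow> ('u \<Rightarrow> 'u \<Rightarrow> 'u) \<Rightarrow> (int \<Rightarrow> 'u set)
     \<Rightarrow> 'u set \<Rightarrow> 'u set \<Rightarrow> int \<Rightarrow> int \<Rightarrow> bool" where
  "quot_transitive su bu Gr S I m n \<longleftrightarrow>
     (\<forall>x \<in> S \<inter> deg_ge su Gr n. (\<forall>y \<in> S \<inter> deg_le su Gr (-1). bu y x \<in> I) \<longrightarrow> x \<in> I) \<and>
     (\<forall>x \<in> S \<inter> deg_le su Gr m. (\<forall>y \<in> S \<inter> deg_ge su Gr 1. bu y x \<in> I) \<longrightarrow> x \<in> I)"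

text \<open>Test algebra: the tensor algebra T(V), realised faithfully as functions on lists of linear
  functionals on V (an element of degree n is a function supported on lists of length n), with the
  concatenation product.  Equalities are only required on lists of linear functionals.\<close>

definition lin_functional :: "('k::field \<Rightarrow> 'v::ab_group_add \<Rightarrow> 'v) \<Rightarrow> ('v \<Rightarrow> 'k) \<Rightarrow> bool" where
  "lin_functional sv f \<longleftrightarrow> (\<forall>x y. f (x + y) = f x + f y) \<and> (\<forall>c x. f (sv c x) = c * f x)"

definition tmul :: "(('v \<Rightarrow> 'k) list \<Rightarrow> 'k::field) \<Rightarrow> (('v \<Rightarrow> 'k) list \<Rightarrow> 'k) \<Rightarrow> ('v \<Rightarrow> 'k) list \<Rightarrow> 'k" where
  "tmul a b fs = (\<Sum>i\<le>length fs. a (take i fs) * b (drop i fs))"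

definition temb :: "'v \<Rightarrow> ('v \<Rightarrow> 'k::field) list \<Rightarrow> 'k" where
  "temb v fs = (if length fs = 1 then hd fs v else 0)"

text \<open>U_+ (the span of positive degrees) is the free Lie superalgebra on the odd space U_1 = V
  (via i1): it is generated by U_1 and the embedding V into T(V) extends to a Lie superalgebra
  morphism U_+ to T(V) (with super-commutator).  Since the free Lie superalgebra embeds in T(V)
  (characteristic 0) this is equivalent to freeness.\<close>
definition positive_part_free :: "('k::field \<Rightarrow> 'u::ab_group_add \<Rightarrow> 'u) \<Rightarrow> ('u \<Rightarrow> 'u \<Rightarrow> 'u) \<Rightarrow> (int \<Rightarrow> 'u set)
     \<Rightarrow> ('k \<Rightarrow> 'v::ab_group_add \<Rightarrow> 'v) \<Rightarrow> ('v \<Rightarrow> 'u) \<Rightarrow> bool" where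
  "positive_part_free su bu Gr sv i1 \<longleftrightarrow>
     deg_ge su Gr 1 \<subseteq> gen_subalg su bu (Gr 1) \<and>
     (\<exists>\<phi> :: 'u \<Rightarrow> ('v \<Rightarrow> 'k) list \<Rightarrow> 'k.
        (\<forall>fs. list_all (lin_functional sv) fs \<longrightarrow>
          (\<forall>x\<in>deg_ge su Gr 1. \<forall>y\<in>deg_ge su Gr 1. \<phi> (x + y) fs = \<phi> x fs + \<phi> y fs) \<and>
          (\<forall>c. \<forall>x\<in>deg_ge su Gr 1. \<phi> (su c x) fs = c * \<phi> x fs) \<and>
          (\<forall>v. \<phi> (i1 v) fs = temb v fs) \<and>
          (\<forall>p q x y. p \<ge> 1 \<longrightarrow> q \<ge> 1 \<longrightarrow> x \<in> Gr p \<longrightarrow> y \<in> Gr q \<longrightarrow>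
             \<phi> (bu x y) fs = tmul (\<phi> x) (\<phi> y) fs - (if even (p * q) then 1 else -1) * tmul (\<phi> y) (\<phi> x) fs)))"

text \<open>U realises the construction: U_0 = g (via i0), U_1 = V (via i1), U_{-p} = Hom(U_1, U_{-p+1})
  for p \<ge> 1 via x \<mapsto> (u \<mapsto> [x,u]), U_+ free on U_1, and th \<in> U_{-1} is Theta.\<close>
definition is_U :: "('k::field \<Rightarrow> 'g::ab_group_add \<Rightarrow> 'g) \<Rightarrow> ('g \<Rightarrow> 'g \<Rightarrow> 'g)
     \<Rightarrow> ('k \<Rightarrow> 'v::ab_group_add \<Rightarrow> 'v) \<Rightarrow> ('g \<Rightarrow> 'v \<Rightarrow> 'v) \<Rightarrow> ('v \<Rightarrow> 'g)
     \<Rightarrow> ('k \<Rightarrow> 'u::ab_group_add \<Rightarrow> 'u) \<Rightarrow> ('u \<Rightarrow> 'u \<Rightarrow> 'u) \<Rightarrow> (int \<Rightarrow> 'u set)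
     \<Rightarrow> ('g \<Rightarrow> 'u) \<Rightarrow> ('v \<Rightarrow> 'u) \<Rightarrow> 'u \<Rightarrow> bool" where
  "is_U sg bg sv act Th su bu Gr i0 i1 th \<longleftrightarrow>
     graded_lie_superalgebra su bu Gr \<and>
     Vector_Spaces.linear sg su i0 \<and> inj i0 \<and> range i0 = Gr 0 \<and> (\<forall>x y. bu (i0 x) (i0 y) = i0 (bg x y)) \<and>
     Vector_Spaces.linear sv su i1 \<and> inj i1 \<and> range i1 = Gr 1 \<and> (\<forall>x u. bu (i0 x) (i1 u) = i1 (act x u)) \<and>
     (\<forall>p::int. p \<ge> 1 \<longrightarrow> bij_betw (\<lambda>x u. bu x (i1 u)) (Gr (-p))
         {f. Vector_Spaces.linear sv su f \<and> range f \<subseteq> Gr (-p + 1)}) \<and>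
     positive_part_free su bu Gr sv i1 \<and>
     th \<in> Gr (-1) \<and> (\<forall>u. bu th (i1 u) = i0 (Th u))"

definition R_Theta :: "('k::field \<Rightarrow> 'u::ab_group_add \<Rightarrow> 'u) \<Rightarrow> ('u \<Rightarrow> 'u \<Rightarrow> 'u) \<Rightarrow> (int \<Rightarrow> 'u set) \<Rightarrow> 'u \<Rightarrow> 'u set" where
  "R_Theta su bu Gr th = \<Inter>{W. module.subspace su W \<and> th \<in> W \<and> (\<forall>x\<in>Gr 0. \<forall>w\<in>W. bu x w \<in> W)}"

definition S_alg :: "('k::field \<Rightarrow> 'u::ab_group_add \<Rightarrow> 'u) \<Rightarrow> ('u \<Rightarrow> 'u \<Rightarrow> 'u) \<Rightarrow> (int \<Rightarrow> 'u set) \<Rightarrow> 'u \<Rightarrow> 'u set" where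
  "S_alg su bu Gr th = gen_subalg su bu (R_Theta su bu Gr th \<union> Gr 0 \<union> Gr 1)"

text \<open>sigma : U_2 \<rightarrow> U_1 linear, sigma([u,v]) = 1/2 (Theta(u).v + Theta(v).u); in U, Theta(u).v = [[th,u],v].\<close>
definition is_sigma :: "('k::field \<Rightarrow> 'u::ab_group_add \<Rightarrow> 'u) \<Rightarrow> ('u \<Rightarrow> 'u \<Rightarrow> 'u) \<Rightarrow> (int \<Rightarrow> 'u set) \<Rightarrow> 'u
     \<Rightarrow> ('u \<Rightarrow> 'u) \<Rightarrow> bool" where
  "is_sigma su bu Gr th \<sigma> \<longleftrightarrow>
     (\<forall>a\<in>Gr 2. \<sigma> a \<in> Gr 1) \<and>
     (\<forall>a\<in>Gr 2. \<forall>b\<in>Gr 2. \<sigma> (a + b) = \<sigma> a + \<sigma> b) \<and>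
     (\<forall>c. \<forall>a\<in>Gr 2. \<sigma> (su c a) = su c (\<sigma> a)) \<and>
     (\<forall>u\<in>Gr 1. \<forall>v\<in>Gr 1. \<sigma> (bu u v) = su (1/2) (bu (bu th u) v + bu (bu th v) u))"

definition K_mod :: "('k::field \<Rightarrow> 'u::ab_group_add \<Rightarrow> 'u) \<Rightarrow> ('u \<Rightarrow> 'u \<Rightarrow> 'u) \<Rightarrow> (int \<Rightarrow> 'u set)
     \<Rightarrow> ('u \<Rightarrow> 'u) \<Rightarrow> 'u set" where
  "K_mod su bu Gr \<sigma> = module.span su (\<Union>{W. module.subspace su W \<and> W \<subseteq> Gr 2 \<and>
       (\<forall>x\<in>Gr 0. \<forall>w\<in>W. bu x w \<in> W) \<and> (\<forall>w\<in>W. \<sigma> w = 0)})"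

text \<open>The ideal I of S with L = (S / calK) / J = S / I: calK is the ideal of S generated by K,
  and I is the preimage of J, i.e. the sum of all graded ideals I' of S with calK \<subseteq> I' and
  I'/calK \<subseteq> T_{3+}, i.e. I' \<subseteq> calK + S_{3+}.\<close>
definition L_ideal :: "('k::field \<Rightarrow> 'u::ab_group_add \<Rightarrow> 'u) \<Rightarrow> ('u \<Rightarrow> 'u \<Rightarrow> 'u) \<Rightarrow> (int \<Rightarrow> 'u set) \<Rightarrow> 'u
     \<Rightarrow> ('u \<Rightarrow> 'u) \<Rightarrow> 'u set" where
  "L_ideal su bu Gr th \<sigma> =
    (let S = S_alg su bu Gr th;
         cK = gen_ideal su bu S (K_mod su bu Gr \<sigma>)
     in module.span su (cK \<union> \<Union>{I'. graded_ideal su bu Gr S I' \<and> cK \<subseteq> I' \<and>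
            I' \<subseteq> {a + b | a b. a \<in> cK \<and> b \<in> S \<inter> deg_ge su Gr 3}}))"

end

theory Submission
  imports Defs
begin

locale GLS =
  fixes su :: "'k::field \<Rightarrow> 'u::ab_group_add \<Rightarrow> 'u" and bu :: "'u \<Rightarrow> 'u \<Rightarrow> 'u"
    and Gr :: "int \<Rightarrow> 'u set"
  assumes gls: "graded_lie_superalgebra su bu Gr"
begin

lemma vs: "vector_space su"
  using gls unfolding graded_lie_superalgebra_def by (elim conjE) assumption

sublocale vector_space su by (rule vs)

lemma Gr_sub0: "\<forall>k. subspace (Gr k)"
  using gls unfolding graded_lie_superalgebra_def by (elim conjE) assumption
lemma Gr_sub: "subspace (Gr k)" using Gr_sub0 by (rule spec)
lemma bilin0: "bilin su su su bu"
  using gls unfolding graded_lie_superalgebra_def by (elim conjE) assumption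
lemma grade0: "\<forall>i j x y. x \<in> Gr i \<longrightarrow> y \<in> Gr j \<longrightarrow> bu x y \<in> Gr (i + j)"
  using gls unfolding graded_lie_superalgebra_def by (elim conjE) assumption
lemma anti0: "\<forall>i j x y. x \<in> Gr i \<longrightarrow> y \<in> Gr j \<longrightarrow> bu x y = - psign (i * j) (bu y x)"
  using gls unfolding graded_lie_superalgebra_def by (elim conjE) assumption
lemma jacobi0: "\<forall>i j x y z. x \<in> Gr i \<longrightarrow> y \<in> Gr j \<longrightarrow>
        bu x (bu y z) = bu (bu x y) z + psign (i * j) (bu y (bu x z))"
  using gls unfolding graded_lie_superalgebra_def by (elim conjE) assumption
lemma decomp0: "\<forall>x. \<exists>!c::int \<Rightarrow> 'u. finite {k. c k \<noteq> 0} \<and> (\<forall>k. c k \<in> Gr k) \<and> x = (\<Sum>k\<in>{k. c k \<noteq> 0}. c k)"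
  using gls unfolding graded_lie_superalgebra_def by (elim conjE) assumption

lemma lin_r: "Vector_Spaces.linear su su (bu x)"
  using bilin0 unfolding bilin_def by (elim conjE) (erule spec)
lemma lin_l: "Vector_Spaces.linear su su (\<lambda>x. bu x y)"
  using bilin0 unfolding bilin_def by (elim conjE) (erule spec)

lemma lin_r': "(\<forall>a b. bu x (a + b) = bu x a + bu x b) \<and> (\<forall>c a. bu x (su c a) = su c (bu x a))"
  using lin_r[of x] unfolding Vector_Spaces.linear_iff by (elim conjE) (intro conjI)
lemma lin_l': "(\<forall>a b. bu (a + b) y = bu a y + bu b y) \<and> (\<forall>c a. bu (su c a) y = su c (bu a y))"
  using lin_l[of y] unfolding Vector_Spaces.linear_iff by (elim conjE) (intro conjI)
lemma bu_add_r: "bu x (a + b) = bu x a + bu x b"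
  using lin_r' by simp
lemma bu_add_l: "bu (a + b) y = bu a y + bu b y"
  using lin_l' by simp
lemma bu_scale_r: "bu x (su c a) = su c (bu x a)"
  using lin_r' by simp
lemma bu_scale_l: "bu (su c a) y = su c (bu a y)"
  using lin_l' by simp
lemma bu_zero_r[simp]: "bu x 0 = 0"
  using bu_add_r[of x 0 0] by simp
lemma bu_zero_l[simp]: "bu 0 y = 0"
  using bu_add_l[of 0 0 y] by simp
lemma bu_sum_r: "bu x (sum f A) = (\<Sum>a\<in>A. bu x (f a))"
  by (induction A rule: infinite_finite_induct) (auto simp: bu_add_r)
lemma bu_sum_l: "bu (sum f A) y = (\<Sum>a\<in>A. bu (f a) y)"
  by (induction A rule: infinite_finite_induct) (auto simp: bu_add_l)

lemma bu_Gr: "x \<in> Gr i \<Longrightarrow> y \<in> Gr j \<Longrightarrow> bu x y \<in> Gr (i + j)"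
  using grade0 by blast
lemma bu_anti: "x \<in> Gr i \<Longrightarrow> y \<in> Gr j \<Longrightarrow> bu x y = - psign (i * j) (bu y x)"
  using anti0 by blast
lemma jacobi: "x \<in> Gr i \<Longrightarrow> y \<in> Gr j \<Longrightarrow>
        bu x (bu y z) = bu (bu x y) z + psign (i * j) (bu y (bu x z))"
  using jacobi0 by blast

lemma psign_sub: "subspace W \<Longrightarrow> a \<in> W \<Longrightarrow> psign n a \<in> W"
  by (simp add: psign_def subspace_neg)
lemma psign_zero[simp]: "psign n 0 = (0::'u)"
  by (simp add: psign_def)

lemma bu_span:
  assumes "a \<in> span A" "b \<in> span B"
  shows "bu a b \<in> span {bu x y | x y. x \<in> A \<and> y \<in> B}"
proof -
  have r: "bu x b \<in> span {bu x y | x y. x \<in> A \<and> y \<in> B}" if "x \<in> A" for x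
    using assms(2)
  proof (induction b rule: span_induct_alt)
    case base then show ?case by (simp add: span_zero)
  next
    case (step c z w)
    have "bu x z \<in> {bu x y | x y. x \<in> A \<and> y \<in> B}" using step(1) that by blast
    then show ?case using step(2)
      by (simp add: bu_add_r bu_scale_r span_add span_scale span_base)
  qed
  show ?thesis using assms(1)
  proof (induction a rule: span_induct_alt)
    case base then show ?case by (simp add: span_zero)
  next
    case (step c z w)
    then show ?case using r
      by (auto simp: bu_add_l bu_scale_l intro!: span_add span_scale)
  qed
qed

lemma subspace_left: "subspace Z \<Longrightarrow> subspace {s. \<forall>y\<in>Y. bu s y \<in> Z}"
  unfolding subspace_def by (auto simp: bu_add_l bu_scale_l)
lemma subspace_right: "subspace Z \<Longrightarrow> subspace {y. \<forall>s\<in>X. bu s y \<in> Z}"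
  unfolding subspace_def by (auto simp: bu_add_r bu_scale_r)

definition comp :: "'u \<Rightarrow> int \<Rightarrow> 'u" where
  "comp x = (THE c. finite {k. c k \<noteq> 0} \<and> (\<forall>k. c k \<in> Gr k) \<and> x = (\<Sum>k\<in>{k. c k \<noteq> 0}. c k))"

lemma decomp_ex1: "\<exists>!c::int \<Rightarrow> 'u. finite {k. c k \<noteq> 0} \<and> (\<forall>k. c k \<in> Gr k) \<and> x = (\<Sum>k\<in>{k. c k \<noteq> 0}. c k)"
  using decomp0 by (rule spec)

lemma comp_prop: "finite {k. comp x k \<noteq> 0} \<and> (\<forall>k. comp x k \<in> Gr k) \<and> x = (\<Sum>k\<in>{k. comp x k \<noteq> 0}. comp x k)"
  unfolding comp_def by (rule theI'[OF decomp_ex1])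

lemma comp_fin: "finite {k. comp x k \<noteq> 0}" using comp_prop by blast
lemma comp_Gr: "comp x k \<in> Gr k" using comp_prop by blast
lemma comp_sum_eq: "x = (\<Sum>k\<in>{k. comp x k \<noteq> 0}. comp x k)" using comp_prop by blast
lemma comp_sum_eq': "(\<Sum>k\<in>{k. comp x k \<noteq> 0}. comp x k) = x" using comp_sum_eq[of x] by (rule sym)

lemma comp_eqI:
  assumes "finite F" "{k. c k \<noteq> 0} \<subseteq> F" "\<And>k. c k \<in> Gr k" "x = (\<Sum>k\<in>F. c k)"
  shows "comp x = c"
proof -
  have fin: "finite {k. c k \<noteq> 0}" using assms(1,2) finite_subset by blast
  have "(\<Sum>k\<in>F. c k) = (\<Sum>k\<in>{k. c k \<noteq> 0}. c k)"
    by (rule sum.mono_neutral_right[OF assms(1,2)]) auto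
  then have P: "finite {k. c k \<noteq> 0} \<and> (\<forall>k. c k \<in> Gr k) \<and> x = (\<Sum>k\<in>{k. c k \<noteq> 0}. c k)"
    using fin assms(3,4) by auto
  show ?thesis unfolding comp_def
    by (rule the1_equality[OF decomp_ex1[of x]]) (rule P)
qed

lemma sum_supp': "finite F \<Longrightarrow> {k. comp x k \<noteq> 0} \<subseteq> F \<Longrightarrow> (\<Sum>k\<in>F. comp x k) = x"
proof -
  assume "finite F" "{k. comp x k \<noteq> 0} \<subseteq> F"
  then have "(\<Sum>k\<in>F. comp x k) = (\<Sum>k\<in>{k. comp x k \<noteq> 0}. comp x k)"
    by (intro sum.mono_neutral_right) auto
  then show ?thesis by (simp only: comp_sum_eq')
qed

lemma comp_add: "comp (x + y) k = comp x k + comp y k"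
proof -
  let ?F = "{k. comp x k \<noteq> 0} \<union> {k. comp y k \<noteq> 0}"
  have "comp (x + y) = (\<lambda>k. comp x k + comp y k)"
  proof (rule comp_eqI[where F="?F"])
    show "finite ?F" using comp_fin by auto
    show "{k. comp x k + comp y k \<noteq> 0} \<subseteq> ?F" by auto
    show "comp x k + comp y k \<in> Gr k" for k using comp_Gr Gr_sub subspace_add by blast
    have ex: "(\<Sum>k\<in>?F. comp x k) = x" by (rule sum_supp') (use comp_fin in auto)
    have ey: "(\<Sum>k\<in>?F. comp y k) = y" by (rule sum_supp') (use comp_fin in auto)
    show "x + y = (\<Sum>k\<in>?F. comp x k + comp y k)"
      by (simp only: sum.distrib ex ey)
  qed
  then show ?thesis by simp
qed

lemma comp_scale: "comp (su a x) k = su a (comp x k)"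
proof -
  let ?F = "{k. comp x k \<noteq> 0}"
  have "comp (su a x) = (\<lambda>k. su a (comp x k))"
  proof (rule comp_eqI[where F="?F"])
    show "finite ?F" using comp_fin by auto
    show "{k. su a (comp x k) \<noteq> 0} \<subseteq> ?F" by auto
    show "su a (comp x k) \<in> Gr k" for k using comp_Gr Gr_sub subspace_scale by blast
    show "su a x = (\<Sum>k\<in>?F. su a (comp x k))"
      by (metis comp_sum_eq' scale_sum_right)
  qed
  then show ?thesis by simp
qed

lemma comp_hom: "x \<in> Gr j \<Longrightarrow> comp x k = (if k = j then x else 0)"
proof -
  assume x: "x \<in> Gr j"
  have "comp x = (\<lambda>k. if k = j then x else 0)"
    by (rule comp_eqI[where F="{j}"]) (auto simp: x subspace_0[OF Gr_sub])
  then show ?thesis by simp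
qed

lemma comp_zero[simp]: "comp 0 k = 0"
  using comp_hom[of 0 0 k] subspace_0[OF Gr_sub] by auto

lemma comp_span: "x \<in> span A \<Longrightarrow> comp x k \<in> span ((\<lambda>a. comp a k) ` A)"
proof (induction x rule: span_induct_alt)
  case base then show ?case by (simp add: span_zero)
next
  case (step c x y)
  have h: "comp x k \<in> (\<lambda>a. comp a k) ` A" using step(1) by (rule imageI)
  have "su c (comp x k) + comp y k \<in> span ((\<lambda>a. comp a k) ` A)"
    by (rule span_add[OF span_scale[OF span_base[OF h]] step(2)])
  then show ?case by (simp add: comp_add comp_scale)
qed

lemma graded_comp:
  assumes "subspace X" "X \<subseteq> span (\<Union>j. X \<inter> Gr j)" "x \<in> X"
  shows "comp x k \<in> X"
proof -
  have "comp x k \<in> span ((\<lambda>a. comp a k) ` (\<Union>j. X \<inter> Gr j))"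
    using comp_span assms(2,3) by blast
  also have "\<dots> \<subseteq> X"
  proof (rule span_minimal[OF _ assms(1)])
    show "(\<lambda>a. comp a k) ` (\<Union>j. X \<inter> Gr j) \<subseteq> X"
      using assms(1) by (auto simp: comp_hom subspace_0)
  qed
  finally show ?thesis .
qed

lemma all_comp_zero: "(\<And>k. comp x k = 0) \<Longrightarrow> x = 0"
proof -
  assume h: "\<And>k. comp x k = 0"
  have "(\<Sum>k\<in>{k. comp x k \<noteq> 0}. comp x k) = 0" by (simp add: h)
  then show "x = 0" by (simp only: comp_sum_eq')
qed

lemma deg_ge_iff: "x \<in> deg_ge su Gr n \<longleftrightarrow> (\<forall>k<n. comp x k = 0)"
proof
  assume x: "x \<in> deg_ge su Gr n"
  show "\<forall>k<n. comp x k = 0"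
  proof (intro allI impI)
    fix k assume k: "k < n"
    have "comp x k \<in> span ((\<lambda>a. comp a k) ` (\<Union>k\<in>{n..}. Gr k))"
      using comp_span x by (simp add: deg_ge_def)
    also have "\<dots> \<subseteq> {0}"
      by (rule span_minimal) (use k in \<open>auto simp: comp_hom\<close>)
    finally show "comp x k = 0" by simp
  qed
next
  assume H: "\<forall>k<n. comp x k = 0"
  have "(\<Sum>k\<in>{k. comp x k \<noteq> 0}. comp x k) \<in> deg_ge su Gr n"
    unfolding deg_ge_def
    by (rule span_sum, rule span_base) (use H comp_Gr in \<open>force\<close>)
  then show "x \<in> deg_ge su Gr n" by (simp only: comp_sum_eq')
qed

lemma deg_le_iff: "x \<in> deg_le su Gr n \<longleftrightarrow> (\<forall>k>n. comp x k = 0)"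
proof
  assume x: "x \<in> deg_le su Gr n"
  show "\<forall>k>n. comp x k = 0"
  proof (intro allI impI)
    fix k assume k: "k > n"
    have "comp x k \<in> span ((\<lambda>a. comp a k) ` (\<Union>k\<in>{..n}. Gr k))"
      using comp_span x by (simp add: deg_le_def)
    also have "\<dots> \<subseteq> {0}"
      by (rule span_minimal) (use k in \<open>auto simp: comp_hom\<close>)
    finally show "comp x k = 0" by simp
  qed
next
  assume H: "\<forall>k>n. comp x k = 0"
  have "(\<Sum>k\<in>{k. comp x k \<noteq> 0}. comp x k) \<in> deg_le su Gr n"
    unfolding deg_le_def
    by (rule span_sum, rule span_base) (use H comp_Gr in \<open>force\<close>)
  then show "x \<in> deg_le su Gr n" by (simp only: comp_sum_eq')
qed

lemma Gr_deg_ge: "x \<in> Gr k \<Longrightarrow> n \<le> k \<Longrightarrow> x \<in> deg_ge su Gr n"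
  unfolding deg_ge_def by (rule span_base) auto
lemma Gr_deg_le: "x \<in> Gr k \<Longrightarrow> k \<le> n \<Longrightarrow> x \<in> deg_le su Gr n"
  unfolding deg_le_def by (rule span_base) auto
lemma deg_ge_sub: "subspace (deg_ge su Gr n)"
  unfolding deg_ge_def by simp
lemma deg_ge_mono: "m \<le> n \<Longrightarrow> deg_ge su Gr n \<subseteq> deg_ge su Gr m"
  unfolding deg_ge_def
proof (rule span_mono, rule subsetI)
  fix x assume mn: "m \<le> n" and "x \<in> (\<Union>k\<in>{n..}. Gr k)"
  then obtain k where "k \<ge> n" "x \<in> Gr k" by auto
  then show "x \<in> (\<Union>k\<in>{m..}. Gr k)" using mn by (intro UN_I[of k]) auto
qed

lemma bu_deg_ge: "a \<in> deg_ge su Gr m \<Longrightarrow> b \<in> deg_ge su Gr n \<Longrightarrow> bu a b \<in> deg_ge su Gr (m + n)"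
proof -
  assume a: "a \<in> deg_ge su Gr m" and b: "b \<in> deg_ge su Gr n"
  have "bu a b \<in> span {bu x y | x y. x \<in> (\<Union>k\<in>{m..}. Gr k) \<and> y \<in> (\<Union>k\<in>{n..}. Gr k)}"
    using bu_span a b unfolding deg_ge_def by blast
  also have "\<dots> \<subseteq> deg_ge su Gr (m + n)"
  proof (rule span_minimal[OF _ deg_ge_sub], rule subsetI)
    fix z assume "z \<in> {bu x y | x y. x \<in> (\<Union>k\<in>{m..}. Gr k) \<and> y \<in> (\<Union>k\<in>{n..}. Gr k)}"
    then obtain x y i j where "z = bu x y" "x \<in> Gr i" "y \<in> Gr j" "i \<ge> m" "j \<ge> n" by auto
    then show "z \<in> deg_ge su Gr (m + n)" using Gr_deg_ge[OF bu_Gr, of x i y j "m + n"] by simp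
  qed
  finally show ?thesis .
qed

lemma comp_bu: "y \<in> Gr j \<Longrightarrow> comp (bu y x) m = bu y (comp x (m - j))"
proof -
  assume y: "y \<in> Gr j"
  let ?S = "{k. comp x k \<noteq> 0}"
  let ?F = "(\<lambda>k. k + j) ` ?S"
  have "comp (bu y x) = (\<lambda>m. bu y (comp x (m - j)))"
  proof (rule comp_eqI[where F="?F"])
    show "finite ?F" using comp_fin by auto
    show "{m. bu y (comp x (m - j)) \<noteq> 0} \<subseteq> ?F"
    proof
      fix m assume "m \<in> {m. bu y (comp x (m - j)) \<noteq> 0}"
      then have "comp x (m - j) \<noteq> 0" by auto
      then show "m \<in> ?F" by (intro image_eqI[of _ _ "m - j"]) auto
    qed
    show "bu y (comp x (m - j)) \<in> Gr m" for m
      using bu_Gr[OF y comp_Gr[of x "m - j"]] by simp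
    have inj: "inj_on (\<lambda>k. k + j) ?S" by (simp add: inj_on_def)
    have "(\<Sum>m\<in>?F. bu y (comp x (m - j))) = (\<Sum>k\<in>?S. bu y (comp x (k + j - j)))"
      using sum.reindex[OF inj, of "\<lambda>m. bu y (comp x (m - j))"] by (simp add: o_def)
    also have "\<dots> = (\<Sum>k\<in>?S. bu y (comp x k))" by simp
    also have "\<dots> = bu y (\<Sum>k\<in>?S. comp x k)" by (rule bu_sum_r[symmetric])
    also have "\<dots> = bu y x" by (simp only: comp_sum_eq')
    finally show "bu y x = (\<Sum>m\<in>?F. bu y (comp x (m - j)))" by simp
  qed
  then show ?thesis by simp
qed

lemma gen_subalg_sub:
  "subspace W \<Longrightarrow> X \<subseteq> W \<Longrightarrow> (\<forall>a\<in>W. \<forall>b\<in>W. bu a b \<in> W) \<Longrightarrow> gen_subalg su bu X \<subseteq> W"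
  unfolding gen_subalg_def by blast
lemma gen_subalg_subspace: "subspace (gen_subalg su bu X)"
  unfolding gen_subalg_def by (rule subspace_Inter) auto
lemma gen_subalg_base: "X \<subseteq> gen_subalg su bu X"
  unfolding gen_subalg_def by blast
lemma gen_subalg_closed: "a \<in> gen_subalg su bu X \<Longrightarrow> b \<in> gen_subalg su bu X \<Longrightarrow> bu a b \<in> gen_subalg su bu X"
  unfolding gen_subalg_def by blast

lemma gen_ideal_sub:
  "subspace W \<Longrightarrow> X \<subseteq> W \<Longrightarrow> (\<forall>s\<in>S. \<forall>a\<in>W. bu s a \<in> W) \<Longrightarrow> gen_ideal su bu S X \<subseteq> W"
  unfolding gen_ideal_def by blast
lemma gen_ideal_subspace: "subspace (gen_ideal su bu S X)"
  unfolding gen_ideal_def by (rule subspace_Inter) auto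
lemma gen_ideal_base: "X \<subseteq> gen_ideal su bu S X"
  unfolding gen_ideal_def by blast
lemma gen_ideal_closed: "s \<in> S \<Longrightarrow> a \<in> gen_ideal su bu S X \<Longrightarrow> bu s a \<in> gen_ideal su bu S X"
  unfolding gen_ideal_def by blast

lemma gen_subalg_hom:
  assumes "X \<subseteq> (\<Union>k. Gr k)" "\<And>x. x \<in> X \<Longrightarrow> Q x"
    "\<And>i j x y. x \<in> Gr i \<Longrightarrow> y \<in> Gr j \<Longrightarrow> Q x \<Longrightarrow> Q y \<Longrightarrow> Q (bu x y)"
  shows "gen_subalg su bu X \<subseteq> span {x. (\<exists>k. x \<in> Gr k) \<and> Q x}"
proof (rule gen_subalg_sub)
  let ?H = "{x. (\<exists>k. x \<in> Gr k) \<and> Q x}"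
  show "subspace (span ?H)" by simp
  show "X \<subseteq> span ?H"
  proof
    fix x assume x: "x \<in> X"
    then obtain k where "x \<in> Gr k" using assms(1) by blast
    then have "x \<in> ?H" using assms(2) x by blast
    then show "x \<in> span ?H" by (rule span_base)
  qed
  show "\<forall>a\<in>span ?H. \<forall>b\<in>span ?H. bu a b \<in> span ?H"
  proof (intro ballI)
    fix a b assume "a \<in> span ?H" "b \<in> span ?H"
    then have "bu a b \<in> span {bu x y | x y. x \<in> ?H \<and> y \<in> ?H}" by (rule bu_span)
    also have "\<dots> \<subseteq> span ?H"
    proof (rule span_minimal[OF _ subspace_span], rule subsetI)
      fix z assume "z \<in> {bu x y | x y. x \<in> ?H \<and> y \<in> ?H}"
      then obtain x y i j where "z = bu x y" "x \<in> Gr i" "y \<in> Gr j" "Q x" "Q y" by auto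
      then have "z \<in> ?H" using bu_Gr assms(3) by blast
      then show "z \<in> span ?H" by (rule span_base)
    qed
    finally show "bu a b \<in> span ?H" .
  qed
qed

end


lemma two_ne0_aux:
  fixes f :: "'k::field \<Rightarrow> 'b::field_char_0"
  assumes "bij f" "\<forall>a b. f (a + b) = f a + f b \<and> f (a * b) = f a * f b"
  shows "(2::'k) \<noteq> 0"
proof
  assume two: "(2::'k) = 0"
  have "f 0 = f 0 + f 0" using assms(2) by (metis add_0)
  then have f0: "f 0 = 0" by simp
  have "f 2 = f 1 + f 1" using assms(2) by (metis one_add_one)
  then have "f 1 + f 1 = 0" using two f0 by simp
  then have "2 * f 1 = 0" by (simp only: mult_2)
  then have "f 1 = f 0" using f0 by simp
  then have "(1::'k) = 0" using assms(1) by (metis bij_is_inj injD)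
  then show False by simp
qed

lemma two_ne0:
  assumes "field_is_R_or_C TYPE('k::field)"
  shows "(2::'k) \<noteq> 0"
  using assms unfolding field_is_R_or_C_def
  by (elim disjE exE conjE) (erule two_ne0_aux, assumption)+


theorem proposition4p8:
  fixes sg :: "'k::field \<Rightarrow> 'g::ab_group_add \<Rightarrow> 'g" and bg :: "'g \<Rightarrow> 'g \<Rightarrow> 'g"
    and sv :: "'k \<Rightarrow> 'v::ab_group_add \<Rightarrow> 'v" and act :: "'g \<Rightarrow> 'v \<Rightarrow> 'v"
    and Th :: "'v \<Rightarrow> 'g"
    and su :: "'k \<Rightarrow> 'u::ab_group_add \<Rightarrow> 'u" and bu :: "'u \<Rightarrow> 'u \<Rightarrow> 'u"
    and Gr :: "int \<Rightarrow> 'u set" and i0 :: "'g \<Rightarrow> 'u" and i1 :: "'v \<Rightarrow> 'u" and th :: 'u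
    and \<sigma> :: "'u \<Rightarrow> 'u"
  assumes "field_is_R_or_C TYPE('k)"
    and "lie_leibniz_triple sg bg sv act Th"
    and "is_U sg bg sv act Th su bu Gr i0 i1 th"
    and "is_sigma su bu Gr th \<sigma>"
  shows "quot_transitive su bu Gr (S_alg su bu Gr th) (L_ideal su bu Gr th \<sigma>) (-2) 2"
proof -
  have gls: "graded_lie_superalgebra su bu Gr"
    using assms(3) unfolding is_U_def by (elim conjE) assumption
  interpret GLS su bu Gr by (rule GLS.intro[OF gls])
  have rng1: "range i1 = Gr 1"
    using assms(3) unfolding is_U_def by (elim conjE) assumption
  have bij0: "\<forall>p::int. p \<ge> 1 \<longrightarrow> bij_betw (\<lambda>x u. bu x (i1 u)) (Gr (-p))
         {f. Vector_Spaces.linear sv su f \<and> range f \<subseteq> Gr (-p + 1)}"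
    using assms(3) unfolding is_U_def by (elim conjE) assumption
  have bij: "\<And>p. p \<ge> 1 \<Longrightarrow> bij_betw (\<lambda>x u. bu x (i1 u)) (Gr (-p))
         {f. Vector_Spaces.linear sv su f \<and> range f \<subseteq> Gr (-p + 1)}" using bij0 by simp
  have ppf: "positive_part_free su bu Gr sv i1"
    using assms(3) unfolding is_U_def by (elim conjE) assumption
  have free1: "deg_ge su Gr 1 \<subseteq> gen_subalg su bu (Gr 1)"
    using ppf unfolding positive_part_free_def by (elim conjE) assumption
  have thG: "th \<in> Gr (-1)"
    using assms(3) unfolding is_U_def by (elim conjE) assumption
  have sigG: "\<forall>a\<in>Gr 2. \<sigma> a \<in> Gr 1"
    using assms(4) unfolding is_sigma_def by (elim conjE) assumption
  have sig_add0: "\<forall>a\<in>Gr 2. \<forall>b\<in>Gr 2. \<sigma> (a + b) = \<sigma> a + \<sigma> b"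
    using assms(4) unfolding is_sigma_def by (elim conjE) assumption
  have sig_scale0: "\<forall>c. \<forall>a\<in>Gr 2. \<sigma> (su c a) = su c (\<sigma> a)"
    using assms(4) unfolding is_sigma_def by (elim conjE) assumption
  have sig_bu0: "\<forall>u\<in>Gr 1. \<forall>v\<in>Gr 1. \<sigma> (bu u v) = su (1/2) (bu (bu th u) v + bu (bu th v) u)"
    using assms(4) unfolding is_sigma_def by (elim conjE) assumption
  have sig_add: "\<And>a b. a \<in> Gr 2 \<Longrightarrow> b \<in> Gr 2 \<Longrightarrow> \<sigma> (a + b) = \<sigma> a + \<sigma> b" using sig_add0 by blast
  have sig_scale: "\<And>c a. a \<in> Gr 2 \<Longrightarrow> \<sigma> (su c a) = su c (\<sigma> a)" using sig_scale0 by blast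
  have sig_bu: "\<And>u v. u \<in> Gr 1 \<Longrightarrow> v \<in> Gr 1 \<Longrightarrow>
      \<sigma> (bu u v) = su (1/2) (bu (bu th u) v + bu (bu th v) u)" using sig_bu0 by blast
  have two: "(2::'k) \<noteq> 0" using two_ne0[OF assms(1)] .
  have G0: "\<And>k. 0 \<in> Gr k" using Gr_sub subspace_0 by blast
  have sig0: "\<sigma> 0 = 0" using sig_scale[of 0 0, OF G0] by simp

  define R where "R = R_Theta su bu Gr th"
  define S where "S = S_alg su bu Gr th"
  define K where "K = K_mod su bu Gr \<sigma>"
  define cK where "cK = gen_ideal su bu S K"
  define I where "I = L_ideal su bu Gr th \<sigma>"
  define CS where "CS = {a + b | a b. a \<in> cK \<and> b \<in> S \<inter> deg_ge su Gr 3}"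
  define Fam where "Fam = {I'. graded_ideal su bu Gr S I' \<and> cK \<subseteq> I' \<and> I' \<subseteq> CS}"
  have I_def': "I = span (cK \<union> \<Union>Fam)"
    unfolding I_def L_ideal_def Fam_def CS_def cK_def S_def K_def Let_def by (rule refl)

  have R_sub: "subspace R" unfolding R_def R_Theta_def by (rule subspace_Inter) auto
  have thR: "th \<in> R" unfolding R_def R_Theta_def by blast
  have R_closed: "\<And>x w. x \<in> Gr 0 \<Longrightarrow> w \<in> R \<Longrightarrow> bu x w \<in> R" unfolding R_def R_Theta_def by blast
  have R_min: "\<And>W. subspace W \<Longrightarrow> th \<in> W \<Longrightarrow> (\<forall>x\<in>Gr 0. \<forall>w\<in>W. bu x w \<in> W) \<Longrightarrow> R \<subseteq> W"
    unfolding R_def R_Theta_def by blast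
  have RG: "R \<subseteq> Gr (-1)"
  proof (rule R_min[OF Gr_sub thG])
    show "\<forall>x\<in>Gr 0. \<forall>w\<in>Gr (- 1). bu x w \<in> Gr (- 1)"
      using bu_Gr[of _ 0 _ "-1"] by simp
  qed
  have R_swap: "\<And>r g. r \<in> R \<Longrightarrow> g \<in> Gr 0 \<Longrightarrow> bu r g \<in> R"
  proof -
    fix r g assume r: "r \<in> R" and g: "g \<in> Gr 0"
    have "bu r g = - psign ((-1) * 0) (bu g r)" using bu_anti[OF _ g] r RG by blast
    then show "bu r g \<in> R" using R_closed[OF g r] R_sub by (simp add: psign_def subspace_neg)
  qed

  have S_sub: "subspace S" unfolding S_def S_alg_def by (rule gen_subalg_subspace)
  have S_closed: "\<And>a b. a \<in> S \<Longrightarrow> b \<in> S \<Longrightarrow> bu a b \<in> S" unfolding S_def S_alg_def by (rule gen_subalg_closed)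
  have S_gens: "R \<union> Gr 0 \<union> Gr 1 \<subseteq> S" unfolding S_def S_alg_def R_def by (rule gen_subalg_base)
  have gens_hom: "R \<union> Gr 0 \<union> Gr 1 \<subseteq> (\<Union>k. Gr k)" using RG by blast
  have S_eq: "S = gen_subalg su bu (R \<union> Gr 0 \<union> Gr 1)" unfolding S_def S_alg_def R_def by (rule refl)
  have S_hom: "S \<subseteq> span {x. (\<exists>k. x \<in> Gr k) \<and> x \<in> S}"
  proof -
    have "gen_subalg su bu (R \<union> Gr 0 \<union> Gr 1) \<subseteq> span {x. (\<exists>k. x \<in> Gr k) \<and> x \<in> S}"
    proof (rule gen_subalg_hom[OF gens_hom, where Q="\<lambda>x. x \<in> S"])
      show "\<And>x. x \<in> R \<union> Gr 0 \<union> Gr 1 \<Longrightarrow> x \<in> S" using S_gens by blast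
      show "\<And>i j x y. x \<in> Gr i \<Longrightarrow> y \<in> Gr j \<Longrightarrow> x \<in> S \<Longrightarrow> y \<in> S \<Longrightarrow> bu x y \<in> S"
        using S_closed by blast
    qed
    then show ?thesis using S_eq by simp
  qed
  have S_graded: "S \<subseteq> span (\<Union>k. S \<inter> Gr k)"
    using S_hom by (rule order_trans) (rule span_mono, blast)
  have S_comp: "\<And>x k. x \<in> S \<Longrightarrow> comp x k \<in> S" using graded_comp[OF S_sub S_graded] by blast

  define P2 where "P2 = {bu u v | u v. u \<in> Gr 1 \<and> v \<in> Gr 1}"
  have P2G: "P2 \<subseteq> Gr 2" unfolding P2_def using bu_Gr[of _ 1 _ 1] by fastforce
  have Gr2_P2: "Gr 2 \<subseteq> span P2"
  proof
    fix x assume x: "x \<in> Gr 2"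
    define W where "W = span (Gr 1 \<union> P2 \<union> deg_ge su Gr 3)"
    have "gen_subalg su bu (Gr 1) \<subseteq> W"
    proof (rule gen_subalg_sub)
      show "subspace W" unfolding W_def by simp
      show "Gr 1 \<subseteq> W" unfolding W_def by (auto intro: span_base)
      show "\<forall>a\<in>W. \<forall>b\<in>W. bu a b \<in> W"
      proof (intro ballI)
        fix a b assume "a \<in> W" "b \<in> W"
        then have "bu a b \<in> span {bu x y | x y. x \<in> Gr 1 \<union> P2 \<union> deg_ge su Gr 3 \<and> y \<in> Gr 1 \<union> P2 \<union> deg_ge su Gr 3}"
          unfolding W_def by (rule bu_span)
        also have "\<dots> \<subseteq> W" unfolding W_def
        proof (rule span_mono, rule subsetI)
          fix z assume "z \<in> {bu x y | x y. x \<in> Gr 1 \<union> P2 \<union> deg_ge su Gr 3 \<and> y \<in> Gr 1 \<union> P2 \<union> deg_ge su Gr 3}"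
          then obtain x y where z: "z = bu x y" and x: "x \<in> Gr 1 \<union> P2 \<union> deg_ge su Gr 3"
            and y: "y \<in> Gr 1 \<union> P2 \<union> deg_ge su Gr 3" by blast
          have x1: "x \<in> deg_ge su Gr 1" using x P2G Gr_deg_ge deg_ge_mono[of 1 3] by fastforce
          have y1: "y \<in> deg_ge su Gr 1" using y P2G Gr_deg_ge deg_ge_mono[of 1 3] by fastforce
          show "z \<in> Gr 1 \<union> P2 \<union> deg_ge su Gr 3"
          proof (cases "x \<in> Gr 1 \<and> y \<in> Gr 1")
            case True then show ?thesis unfolding P2_def z by blast
          next
            case False
            then have "x \<in> deg_ge su Gr 2 \<or> y \<in> deg_ge su Gr 2"
              using x y P2G Gr_deg_ge deg_ge_mono[of 2 3] by fastforce
            then have "bu x y \<in> deg_ge su Gr 3"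
              using bu_deg_ge[OF x1, of y 2] bu_deg_ge[of x 2 y 1] y1 by auto
            then show ?thesis unfolding z by blast
          qed
        qed
        finally show "bu a b \<in> W" .
      qed
    qed
    with free1 have "deg_ge su Gr 1 \<subseteq> W" by blast
    then have xW: "x \<in> W" using Gr_deg_ge[OF x] by auto
    have "comp x 2 \<in> span ((\<lambda>a. comp a 2) ` (Gr 1 \<union> P2 \<union> deg_ge su Gr 3))"
      using comp_span xW unfolding W_def by blast
    also have "\<dots> \<subseteq> span P2"
    proof (rule span_minimal[OF _ subspace_span], rule subsetI)
      fix b assume "b \<in> (\<lambda>a. comp a 2) ` (Gr 1 \<union> P2 \<union> deg_ge su Gr 3)"
      then obtain a where b: "b = comp a 2" and a: "a \<in> Gr 1 \<union> P2 \<union> deg_ge su Gr 3" by blast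
      from a have "comp a 2 \<in> span P2"
      proof (elim UnE)
        assume "a \<in> Gr 1" then show "comp a 2 \<in> span P2" by (simp add: comp_hom span_zero)
      next
        assume a2: "a \<in> P2"
        then have "a \<in> Gr 2" using P2G by blast
        then have "comp a 2 = a" by (simp add: comp_hom)
        then show "comp a 2 \<in> span P2" using span_base[OF a2] by simp
      next
        assume "a \<in> deg_ge su Gr 3" then show "comp a 2 \<in> span P2" by (simp add: deg_ge_iff span_zero)
      qed
      then show "b \<in> span P2" unfolding b .
    qed
    finally show "x \<in> span P2" using comp_hom[OF x] by simp
  qed
  have P2S: "P2 \<subseteq> S" unfolding P2_def using S_gens S_closed by blast
  have Gr2S: "Gr 2 \<subseteq> S" using Gr2_P2 span_minimal[OF P2S S_sub] by blast

  have sig_th_gen: "\<And>u v. u \<in> Gr 1 \<Longrightarrow> v \<in> Gr 1 \<Longrightarrow> \<sigma> (bu u v) = su (1/2) (bu th (bu u v))"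
  proof -
    fix u v assume u: "u \<in> Gr 1" and v: "v \<in> Gr 1"
    have tv: "bu th v \<in> Gr 0" using bu_Gr[OF thG v] by simp
    have "bu th (bu u v) = bu (bu th u) v + psign ((-1) * 1) (bu u (bu th v))"
      by (rule jacobi[OF thG u])
    also have "bu u (bu th v) = - psign (1 * 0) (bu (bu th v) u)" by (rule bu_anti[OF u tv])
    finally have "bu th (bu u v) = bu (bu th u) v + bu (bu th v) u" by (simp add: psign_def)
    then show "\<sigma> (bu u v) = su (1/2) (bu th (bu u v))" using sig_bu[OF u v] by simp
  qed
  have sig_th: "\<And>w. w \<in> Gr 2 \<Longrightarrow> \<sigma> w = su (1/2) (bu th w)"
  proof -
    fix w assume "w \<in> Gr 2"
    then have "w \<in> span P2" using Gr2_P2 by blast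
    then have "w \<in> Gr 2 \<and> \<sigma> w = su (1/2) (bu th w)"
    proof (induction w rule: span_induct_alt)
      case base then show ?case by (simp add: G0 sig0)
    next
      case (step c x y)
      have x2: "x \<in> Gr 2" using step(1) P2G by blast
      have cx2: "su c x \<in> Gr 2" using x2 Gr_sub subspace_scale by blast
      have sx: "\<sigma> x = su (1/2) (bu th x)" using step(1) sig_th_gen unfolding P2_def by blast
      have "\<sigma> (su c x + y) = su c (\<sigma> x) + \<sigma> y" using sig_add[OF cx2] step(2) sig_scale[OF x2] by simp
      also have "\<dots> = su (1/2) (bu th (su c x + y))"
        using step(2) sx by (simp add: bu_add_r bu_scale_r scale_right_distrib scale_left_commute)
      finally show ?case using cx2 step(2) Gr_sub subspace_add by blast
    qed
    then show "\<sigma> w = su (1/2) (bu th w)" by blast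
  qed

  define KF where "KF = {W. subspace W \<and> W \<subseteq> Gr 2 \<and> (\<forall>x\<in>Gr 0. \<forall>w\<in>W. bu x w \<in> W) \<and> (\<forall>w\<in>W. \<sigma> w = 0)}"
  have K_def': "K = span (\<Union>KF)" unfolding K_def K_mod_def KF_def by simp
  have KG: "K \<subseteq> Gr 2" unfolding K_def' by (rule span_minimal[OF _ Gr_sub]) (auto simp: KF_def)
  have K_sig: "\<And>k. k \<in> K \<Longrightarrow> \<sigma> k = 0"
  proof -
    fix k assume "k \<in> K"
    then have "k \<in> span (\<Union>KF)" unfolding K_def' .
    then have "k \<in> Gr 2 \<and> \<sigma> k = 0"
    proof (induction k rule: span_induct_alt)
      case base then show ?case by (simp add: G0 sig0)
    next
      case (step c x y)
      have x2: "x \<in> Gr 2" and sx: "\<sigma> x = 0" using step(1) unfolding KF_def by blast+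
      have cx2: "su c x \<in> Gr 2" using x2 Gr_sub subspace_scale by blast
      have "\<sigma> (su c x + y) = 0" using sig_add[OF cx2] step(2) sig_scale[OF x2] sx by simp
      then show ?case using cx2 step(2) Gr_sub subspace_add by blast
    qed
    then show "\<sigma> k = 0" by blast
  qed
  have K_th: "\<And>k. k \<in> K \<Longrightarrow> bu th k = 0"
  proof -
    fix k assume k: "k \<in> K"
    have "su (1/2) (bu th k) = 0" using sig_th[of k] KG k K_sig[OF k] by auto
    then have h: "su (1/2) (bu th k) = 0" .
    have h21: "(2::'k) * (1/2) = 1" using two by simp
    have "bu th k = su (2 * (1/2)) (bu th k)" by (simp only: h21 scale_one)
    also have "\<dots> = su 2 (su (1/2) (bu th k))" by (simp only: scale_scale)
    also have "\<dots> = 0" by (simp only: h scale_zero_right)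
    finally show "bu th k = 0" .
  qed
  have K_closed: "\<And>g k. g \<in> Gr 0 \<Longrightarrow> k \<in> K \<Longrightarrow> bu g k \<in> K"
  proof -
    fix g k assume g: "g \<in> Gr 0" and k: "k \<in> K"
    have "bu g k \<in> span {bu x y | x y. x \<in> {g} \<and> y \<in> \<Union>KF}"
      using bu_span[of g "{g}" k "\<Union>KF"] k unfolding K_def' by (simp add: span_base)
    also have "\<dots> \<subseteq> K" unfolding K_def' by (rule span_mono) (use g in \<open>auto simp: KF_def\<close>)
    finally show "bu g k \<in> K" .
  qed
  have KS: "K \<subseteq> S" using KG Gr2S by blast
  have RK: "\<And>r k. r \<in> R \<Longrightarrow> k \<in> K \<Longrightarrow> bu r k = 0"
  proof -
    have "R \<subseteq> Gr (-1) \<inter> {r. \<forall>k\<in>K. bu r k \<in> {0}}"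
    proof (rule R_min)
      show "subspace (Gr (-1) \<inter> {r. \<forall>k\<in>K. bu r k \<in> {0}})"
        by (rule subspace_inter[OF Gr_sub subspace_left]) simp
      show "th \<in> Gr (-1) \<inter> {r. \<forall>k\<in>K. bu r k \<in> {0}}" using thG K_th by auto
      show "\<forall>x\<in>Gr 0. \<forall>w\<in>Gr (-1) \<inter> {r. \<forall>k\<in>K. bu r k \<in> {0}}. bu x w \<in> Gr (-1) \<inter> {r. \<forall>k\<in>K. bu r k \<in> {0}}"
      proof (intro ballI)
        fix x w assume x: "x \<in> Gr 0" and w: "w \<in> Gr (-1) \<inter> {r. \<forall>k\<in>K. bu r k \<in> {0}}"
        have "bu x w \<in> Gr (-1)" using bu_Gr[OF x, of w "-1"] w by simp
        moreover have "bu (bu x w) k = 0" if k: "k \<in> K" for k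
        proof -
          have "bu x (bu w k) = bu (bu x w) k + psign (0 * (-1)) (bu w (bu x k))"
            using jacobi[OF x, of w "-1"] w by blast
          then show ?thesis using w k K_closed[OF x k] by (simp add: psign_def)
        qed
        ultimately show "bu x w \<in> Gr (-1) \<inter> {r. \<forall>k\<in>K. bu r k \<in> {0}}" by simp
      qed
    qed
    then show "\<And>r k. r \<in> R \<Longrightarrow> k \<in> K \<Longrightarrow> bu r k = 0" by blast
  qed

  define ZF where "ZF = {W. subspace W \<and> K \<subseteq> W \<and> (\<forall>g\<in>Gr 0. \<forall>w\<in>W. bu g w \<in> W) \<and> (\<forall>u\<in>Gr 1. \<forall>w\<in>W. bu u w \<in> W)}"
  define Z where "Z = \<Inter>ZF"
  have Z_sub: "subspace Z" unfolding Z_def ZF_def by (rule subspace_Inter) blast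
  have KZ: "K \<subseteq> Z" unfolding Z_def ZF_def by blast
  have Z_c0: "\<And>g w. g \<in> Gr 0 \<Longrightarrow> w \<in> Z \<Longrightarrow> bu g w \<in> Z" unfolding Z_def ZF_def by blast
  have Z_c1: "\<And>u w. u \<in> Gr 1 \<Longrightarrow> w \<in> Z \<Longrightarrow> bu u w \<in> Z" unfolding Z_def ZF_def by blast
  have Z_min: "\<And>W. W \<in> ZF \<Longrightarrow> Z \<subseteq> W" unfolding Z_def by blast
  have Z_deg: "Z \<subseteq> deg_ge su Gr 2"
  proof (rule Z_min, unfold ZF_def, intro CollectI conjI ballI)
    show "subspace (deg_ge su Gr 2)" by (rule deg_ge_sub)
    show "K \<subseteq> deg_ge su Gr 2" using KG Gr_deg_ge by blast
    show "bu g w \<in> deg_ge su Gr 2" if "g \<in> Gr 0" "w \<in> deg_ge su Gr 2" for g w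
      using bu_deg_ge[OF Gr_deg_ge[OF that(1), of 0] that(2)] by simp
    show "bu u w \<in> deg_ge su Gr 2" if "u \<in> Gr 1" "w \<in> deg_ge su Gr 2" for u w
      using bu_deg_ge[OF Gr_deg_ge[OF that(1), of 1] that(2)] deg_ge_mono[of 2 3] by auto
  qed
  have ZR: "\<And>r z. r \<in> R \<Longrightarrow> z \<in> Z \<Longrightarrow> bu r z \<in> Z"
  proof -
    have "Z \<subseteq> Z \<inter> {z. \<forall>r\<in>R. bu r z \<in> Z}"
    proof (rule Z_min, unfold ZF_def, intro CollectI conjI ballI)
      show "subspace (Z \<inter> {z. \<forall>r\<in>R. bu r z \<in> Z})"
        by (rule subspace_inter[OF Z_sub subspace_right[OF Z_sub]])
      show "K \<subseteq> Z \<inter> {z. \<forall>r\<in>R. bu r z \<in> Z}"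
        using KZ RK subspace_0[OF Z_sub] by auto
      show "bu g w \<in> Z \<inter> {z. \<forall>r\<in>R. bu r z \<in> Z}" if g: "g \<in> Gr 0" and w: "w \<in> Z \<inter> {z. \<forall>r\<in>R. bu r z \<in> Z}" for g w
      proof -
        have "bu r (bu g w) \<in> Z" if r: "r \<in> R" for r
        proof -
          have rG: "r \<in> Gr (-1)" using r RG by blast
          have "bu r (bu g w) = bu (bu r g) w + psign ((-1) * 0) (bu g (bu r w))"
            by (rule jacobi[OF rG g])
          moreover have "bu (bu r g) w \<in> Z" using w R_swap[OF r g] by blast
          moreover have "bu g (bu r w) \<in> Z" using w r Z_c0[OF g] by blast
          ultimately show ?thesis using Z_sub by (simp add: psign_def subspace_add)
        qed
        then show ?thesis using Z_c0[OF g] w by blast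
      qed
      show "bu u w \<in> Z \<inter> {z. \<forall>r\<in>R. bu r z \<in> Z}" if u: "u \<in> Gr 1" and w: "w \<in> Z \<inter> {z. \<forall>r\<in>R. bu r z \<in> Z}" for u w
      proof -
        have "bu r (bu u w) \<in> Z" if r: "r \<in> R" for r
        proof -
          have rG: "r \<in> Gr (-1)" using r RG by blast
          have "bu r (bu u w) = bu (bu r u) w + psign ((-1) * 1) (bu u (bu r w))"
            by (rule jacobi[OF rG u])
          moreover have "bu r u \<in> Gr 0" using bu_Gr[OF rG u] by simp
          then have "bu (bu r u) w \<in> Z" using w Z_c0 by blast
          moreover have "bu u (bu r w) \<in> Z" using w r Z_c1[OF u] by blast
          ultimately show ?thesis using Z_sub by (simp add: psign_sub subspace_add)
        qed
        then show ?thesis using Z_c1[OF u] w by blast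
      qed
    qed
    then show "\<And>r z. r \<in> R \<Longrightarrow> z \<in> Z \<Longrightarrow> bu r z \<in> Z" by blast
  qed
  have SZ: "\<And>s z. s \<in> S \<Longrightarrow> z \<in> Z \<Longrightarrow> bu s z \<in> Z"
  proof -
    have "gen_subalg su bu (R \<union> Gr 0 \<union> Gr 1) \<subseteq> span {x. (\<exists>k. x \<in> Gr k) \<and> (\<forall>z\<in>Z. bu x z \<in> Z)}"
    proof (rule gen_subalg_hom[OF gens_hom, where Q="\<lambda>x. \<forall>z\<in>Z. bu x z \<in> Z"])
      show "\<And>x. x \<in> R \<union> Gr 0 \<union> Gr 1 \<Longrightarrow> \<forall>z\<in>Z. bu x z \<in> Z" using ZR Z_c0 Z_c1 by blast
      show "\<forall>z\<in>Z. bu (bu x y) z \<in> Z"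
        if x: "x \<in> Gr i" and y: "y \<in> Gr j" and qx: "\<forall>z\<in>Z. bu x z \<in> Z" and qy: "\<forall>z\<in>Z. bu y z \<in> Z" for i j x y
      proof
        fix z assume z: "z \<in> Z"
        have "bu x (bu y z) = bu (bu x y) z + psign (i * j) (bu y (bu x z))" by (rule jacobi[OF x y])
        then have "bu (bu x y) z = bu x (bu y z) - psign (i * j) (bu y (bu x z))" by (simp add: algebra_simps)
        moreover have "bu x (bu y z) \<in> Z" using qx qy z by blast
        moreover have "psign (i * j) (bu y (bu x z)) \<in> Z" using qx qy z Z_sub psign_sub by blast
        ultimately show "bu (bu x y) z \<in> Z" using Z_sub subspace_diff by metis
      qed
    qed
    also have "\<dots> \<subseteq> {s. \<forall>z\<in>Z. bu s z \<in> Z}"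
      by (rule span_minimal[OF _ subspace_left[OF Z_sub]]) blast
    finally show "\<And>s z. s \<in> S \<Longrightarrow> z \<in> Z \<Longrightarrow> bu s z \<in> Z" using S_eq by blast
  qed

  have cK_sub: "subspace cK" unfolding cK_def by (rule gen_ideal_subspace)
  have KcK: "K \<subseteq> cK" unfolding cK_def by (rule gen_ideal_base)
  have cK_closed: "\<And>s a. s \<in> S \<Longrightarrow> a \<in> cK \<Longrightarrow> bu s a \<in> cK" unfolding cK_def by (rule gen_ideal_closed)
  have cKZ: "cK \<subseteq> Z" unfolding cK_def by (rule gen_ideal_sub[OF Z_sub KZ]) (use SZ in blast)
  have cK_deg: "cK \<subseteq> deg_ge su Gr 2" using cKZ Z_deg by blast
  have cKS: "cK \<subseteq> S" unfolding cK_def by (rule gen_ideal_sub[OF S_sub KS]) (use S_closed in blast)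
  have cK_graded: "cK \<subseteq> span (\<Union>k. cK \<inter> Gr k)"
    unfolding cK_def
  proof (rule gen_ideal_sub[OF subspace_span])
    show "K \<subseteq> span (\<Union>k. gen_ideal su bu S K \<inter> Gr k)"
      using KcK KG unfolding cK_def by (blast intro: span_base)
    show "\<forall>s\<in>S. \<forall>a\<in>span (\<Union>k. gen_ideal su bu S K \<inter> Gr k). bu s a \<in> span (\<Union>k. gen_ideal su bu S K \<inter> Gr k)"
    proof (intro ballI)
      fix s a assume s: "s \<in> S" and a: "a \<in> span (\<Union>k. gen_ideal su bu S K \<inter> Gr k)"
      have "bu s a \<in> span {bu x y | x y. x \<in> {x. (\<exists>k. x \<in> Gr k) \<and> x \<in> S} \<and> y \<in> (\<Union>k. gen_ideal su bu S K \<inter> Gr k)}"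
        using bu_span S_hom s a by blast
      also have "\<dots> \<subseteq> span (\<Union>k. gen_ideal su bu S K \<inter> Gr k)"
      proof (rule span_mono, rule subsetI)
        fix z assume "z \<in> {bu x y | x y. x \<in> {x. (\<exists>k. x \<in> Gr k) \<and> x \<in> S} \<and> y \<in> (\<Union>k. gen_ideal su bu S K \<inter> Gr k)}"
        then obtain x y i k where z: "z = bu x y" and "x \<in> Gr i" "x \<in> S" "y \<in> gen_ideal su bu S K" "y \<in> Gr k" by blast
        then have "z \<in> gen_ideal su bu S K \<inter> Gr (i + k)" using gen_ideal_closed bu_Gr by blast
        then show "z \<in> (\<Union>k. gen_ideal su bu S K \<inter> Gr k)" by blast
      qed
      finally show "bu s a \<in> span (\<Union>k. gen_ideal su bu S K \<inter> Gr k)" .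
    qed
  qed

  have I_sub: "subspace I" unfolding I_def' by simp
  have cKI: "cK \<subseteq> I" unfolding I_def' by (blast intro: span_base)
  have FamI: "\<And>I'. I' \<in> Fam \<Longrightarrow> I' \<subseteq> I" unfolding I_def' by (blast intro: span_base)
  have CS_sub: "subspace CS"
  proof (rule subspaceI)
    show "0 \<in> CS" unfolding CS_def using subspace_0[OF cK_sub] subspace_0[OF S_sub] subspace_0[OF deg_ge_sub]
      by (intro CollectI exI[of _ 0]) simp
    show "x + y \<in> CS" if hx: "x \<in> CS" "y \<in> CS" for x y
    proof -
      obtain a b where "x = a + b" "a \<in> cK" "b \<in> S" "b \<in> deg_ge su Gr 3" using hx(1) unfolding CS_def by blast
      moreover obtain a' b' where "y = a' + b'" "a' \<in> cK" "b' \<in> S" "b' \<in> deg_ge su Gr 3" using hx(2) unfolding CS_def by blast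
      ultimately have "x + y = (a + a') + (b + b')" "a + a' \<in> cK" "b + b' \<in> S" "b + b' \<in> deg_ge su Gr 3"
        using subspace_add[OF cK_sub] subspace_add[OF S_sub] subspace_add[OF deg_ge_sub] by (auto simp: algebra_simps)
      then show ?thesis unfolding CS_def by blast
    qed
    show "su c x \<in> CS" if hx: "x \<in> CS" for c x
    proof -
      obtain a b where "x = a + b" "a \<in> cK" "b \<in> S" "b \<in> deg_ge su Gr 3" using hx(1) unfolding CS_def by blast
      then have "su c x = su c a + su c b" "su c a \<in> cK" "su c b \<in> S" "su c b \<in> deg_ge su Gr 3"
        using subspace_scale[OF cK_sub] subspace_scale[OF S_sub] subspace_scale[OF deg_ge_sub] by (auto simp: scale_right_distrib)
      then show ?thesis unfolding CS_def by blast
    qed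
  qed
  have cK_CS: "cK \<subseteq> CS"
  proof
    fix a assume "a \<in> cK"
    moreover have "(0::'u) \<in> S \<inter> deg_ge su Gr 3" using subspace_0[OF S_sub] subspace_0[OF deg_ge_sub] by blast
    ultimately show "a \<in> CS" unfolding CS_def by (intro CollectI exI[of _ a] exI[of _ 0]) simp
  qed
  have I_CS: "I \<subseteq> CS" unfolding I_def'
    by (rule span_minimal[OF _ CS_sub]) (use cK_CS in \<open>auto simp: Fam_def\<close>)
  have CS_deg: "CS \<subseteq> deg_ge su Gr 2"
  proof
    fix x assume "x \<in> CS"
    then obtain a b where xab: "x = a + b" and a: "a \<in> cK" and b: "b \<in> deg_ge su Gr 3" unfolding CS_def by blast
    have a2: "a \<in> deg_ge su Gr 2" using a cK_deg by blast
    have b2: "b \<in> deg_ge su Gr 2" using b deg_ge_mono[of 2 3] by auto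
    show "x \<in> deg_ge su Gr 2" unfolding xab by (rule subspace_add[OF deg_ge_sub a2 b2])
  qed
  have I_deg: "I \<subseteq> deg_ge su Gr 2" using I_CS CS_deg by blast
  have I_S: "I \<subseteq> S" unfolding I_def'
    by (rule span_minimal[OF _ S_sub]) (use cKS in \<open>auto simp: Fam_def graded_ideal_def\<close>)
  have I_ideal: "\<And>s a. s \<in> S \<Longrightarrow> a \<in> I \<Longrightarrow> bu s a \<in> I"
  proof -
    fix s a assume s: "s \<in> S" and a: "a \<in> I"
    have "bu s a \<in> span {bu x y | x y. x \<in> {s} \<and> y \<in> cK \<union> \<Union>Fam}"
      using bu_span[of s "{s}" a "cK \<union> \<Union>Fam"] a span_base[of s "{s}"] unfolding I_def' by blast
    also have "\<dots> \<subseteq> I" unfolding I_def'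
    proof (rule span_mono, rule subsetI)
      fix z assume "z \<in> {bu x y | x y. x \<in> {s} \<and> y \<in> cK \<union> \<Union>Fam}"
      then obtain y where z: "z = bu s y" and y: "y \<in> cK \<union> \<Union>Fam" by blast
      then show "z \<in> cK \<union> \<Union>Fam"
      proof (elim UnE)
        assume "y \<in> cK" then show ?thesis using z cK_closed[OF s] by blast
      next
        assume "y \<in> \<Union>Fam"
        then obtain I' where "I' \<in> Fam" "y \<in> I'" by blast
        then have "bu s y \<in> I'" using s unfolding Fam_def graded_ideal_def by blast
        then show ?thesis using z \<open>I' \<in> Fam\<close> by blast
      qed
    qed
    finally show "bu s a \<in> I" .
  qed
  have cKspan: "cK \<subseteq> span (cK \<union> \<Union>Fam)" using span_superset[of "cK \<union> \<Union>Fam"] by blast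
  have Famspan: "\<And>I'. I' \<in> Fam \<Longrightarrow> I' \<subseteq> span (cK \<union> \<Union>Fam)" using span_superset[of "cK \<union> \<Union>Fam"] by blast
  have I_graded: "I \<subseteq> span (\<Union>k. I \<inter> Gr k)" unfolding I_def'
  proof (rule span_minimal[OF _ subspace_span], rule subsetI)
    fix x assume "x \<in> cK \<union> \<Union>Fam"
    then show "x \<in> span (\<Union>k. span (cK \<union> \<Union>Fam) \<inter> Gr k)"
    proof (elim UnE)
      assume "x \<in> cK"
      then have "x \<in> span (\<Union>k. cK \<inter> Gr k)" using cK_graded by blast
      also have "\<dots> \<subseteq> span (\<Union>k. span (cK \<union> \<Union>Fam) \<inter> Gr k)"
        by (rule span_mono) (use cKspan in blast)
      finally show ?thesis .
    next
      assume "x \<in> \<Union>Fam"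
      then obtain I' where I': "I' \<in> Fam" "x \<in> I'" by blast
      have "graded_ideal su bu Gr S I'" using I'(1) unfolding Fam_def by simp
      then have "I' \<subseteq> span (\<Union>k. I' \<inter> Gr k)" unfolding graded_ideal_def graded_set_def by (elim conjE) assumption
      then have "x \<in> span (\<Union>k. I' \<inter> Gr k)" using I'(2) by blast
      also have "\<dots> \<subseteq> span (\<Union>k. span (cK \<union> \<Union>Fam) \<inter> Gr k)"
        by (rule span_mono) (use Famspan[OF I'(1)] in blast)
      finally show ?thesis .
    qed
  qed
  have I_comp: "\<And>x k. x \<in> I \<Longrightarrow> comp x k \<in> I" using graded_comp[OF I_sub I_graded] by blast

  have key: "x0 \<in> I" if x0S: "x0 \<in> S" and x0G: "x0 \<in> Gr k0" and k0: "k0 \<ge> 3"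
    and hyp: "\<And>y j. j < 0 \<Longrightarrow> y \<in> S \<Longrightarrow> y \<in> Gr j \<Longrightarrow> bu y x0 \<in> I" for x0 k0
  proof -
    define AF where "AF = {W. subspace W \<and> I \<subseteq> W \<and> x0 \<in> W \<and>
        (\<forall>s j w. 0 \<le> j \<longrightarrow> s \<in> S \<longrightarrow> s \<in> Gr j \<longrightarrow> w \<in> W \<longrightarrow> bu s w \<in> W)}"
    define A where "A = \<Inter>AF"
    have A_sub: "subspace A" unfolding A_def AF_def by (rule subspace_Inter) blast
    have IA: "I \<subseteq> A" unfolding A_def AF_def by blast
    have x0A: "x0 \<in> A" unfolding A_def AF_def by blast
    have A_c: "\<And>s j w. 0 \<le> j \<Longrightarrow> s \<in> S \<Longrightarrow> s \<in> Gr j \<Longrightarrow> w \<in> A \<Longrightarrow> bu s w \<in> A"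
      unfolding A_def AF_def by blast
    have A_min: "\<And>W. W \<in> AF \<Longrightarrow> A \<subseteq> W" unfolding A_def by blast
    define H3 where "H3 = {x. x \<in> S \<and> (\<exists>m\<ge>3. x \<in> Gr m)}"
    have A_D: "A \<subseteq> span (I \<union> H3)"
    proof (rule A_min, unfold AF_def, intro CollectI conjI allI impI)
      show "subspace (span (I \<union> H3))" by simp
      show "I \<subseteq> span (I \<union> H3)" by (blast intro: span_base)
      show "x0 \<in> span (I \<union> H3)" using x0S x0G k0 unfolding H3_def by (blast intro: span_base)
      fix s j w assume j: "0 \<le> j" and s: "s \<in> S" and sG: "s \<in> Gr j" and w: "w \<in> span (I \<union> H3)"
      have "bu s w \<in> span {bu x y | x y. x \<in> {s} \<and> y \<in> I \<union> H3}"
        using bu_span[of s "{s}" w "I \<union> H3"] w span_base[of s "{s}"] by blast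
      also have "\<dots> \<subseteq> span (I \<union> H3)"
      proof (rule span_mono, rule subsetI)
        fix z assume "z \<in> {bu x y | x y. x \<in> {s} \<and> y \<in> I \<union> H3}"
        then obtain y where z: "z = bu s y" and y: "y \<in> I \<union> H3" by blast
        then show "z \<in> I \<union> H3"
        proof (elim UnE)
          assume "y \<in> I" then show ?thesis using z I_ideal[OF s] by blast
        next
          assume "y \<in> H3"
          then obtain m where "m \<ge> 3" "y \<in> Gr m" "y \<in> S" unfolding H3_def by blast
          then have "bu s y \<in> Gr (j + m)" "bu s y \<in> S" "j + m \<ge> 3" using bu_Gr[OF sG] S_closed[OF s] j by auto
          then show ?thesis unfolding z H3_def by blast
        qed
      qed
      finally show "bu s w \<in> span (I \<union> H3)" .
    qed
    have D_S: "span (I \<union> H3) \<subseteq> S"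
      by (rule span_minimal[OF _ S_sub]) (use I_S in \<open>auto simp: H3_def\<close>)
    have D_CS: "span (I \<union> H3) \<subseteq> CS"
    proof (rule span_minimal[OF _ CS_sub], rule subsetI)
      fix x assume "x \<in> I \<union> H3"
      then show "x \<in> CS"
      proof (elim UnE)
        assume "x \<in> I" then show ?thesis using I_CS by blast
      next
        assume "x \<in> H3"
        then obtain m where "m \<ge> 3" "x \<in> Gr m" "x \<in> S" unfolding H3_def by blast
        then have "x \<in> S \<inter> deg_ge su Gr 3" using Gr_deg_ge by blast
        moreover have "(0::'u) \<in> cK" using subspace_0[OF cK_sub] .
        ultimately show ?thesis unfolding CS_def by (intro CollectI exI[of _ 0] exI[of _ x]) simp
      qed
    qed
    have A_graded: "A \<subseteq> span (\<Union>k. A \<inter> Gr k)"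
    proof (rule A_min, unfold AF_def, intro CollectI conjI allI impI)
      show "subspace (span (\<Union>k. A \<inter> Gr k))" by simp
      have "I \<subseteq> span (\<Union>k. I \<inter> Gr k)" by (rule I_graded)
      also have "\<dots> \<subseteq> span (\<Union>k. A \<inter> Gr k)" by (rule span_mono) (use IA in blast)
      finally show "I \<subseteq> span (\<Union>k. A \<inter> Gr k)" .
      show "x0 \<in> span (\<Union>k. A \<inter> Gr k)" using x0A x0G by (blast intro: span_base)
      fix s j w assume j: "0 \<le> j" and s: "s \<in> S" and sG: "s \<in> Gr j" and w: "w \<in> span (\<Union>k. A \<inter> Gr k)"
      have "bu s w \<in> span {bu x y | x y. x \<in> {s} \<and> y \<in> (\<Union>k. A \<inter> Gr k)}"
        using bu_span[of s "{s}" w "\<Union>k. A \<inter> Gr k"] w span_base[of s "{s}"] by blast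
      also have "\<dots> \<subseteq> span (\<Union>k. A \<inter> Gr k)"
      proof (rule span_mono, rule subsetI)
        fix z assume "z \<in> {bu x y | x y. x \<in> {s} \<and> y \<in> (\<Union>k. A \<inter> Gr k)}"
        then obtain y m where z: "z = bu s y" and "y \<in> A" "y \<in> Gr m" by blast
        then have "z \<in> A \<inter> Gr (j + m)" using A_c[OF j s sG] bu_Gr[OF sG] by blast
        then show "z \<in> (\<Union>k. A \<inter> Gr k)" by blast
      qed
      finally show "bu s w \<in> span (\<Union>k. A \<inter> Gr k)" .
    qed
    have A_neg: "\<And>y i w. i < 0 \<Longrightarrow> y \<in> S \<Longrightarrow> y \<in> Gr i \<Longrightarrow> w \<in> A \<Longrightarrow> bu y w \<in> A"
    proof -
      define Yn where "Yn = {y. \<exists>i<0. y \<in> S \<and> y \<in> Gr i}"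
      have "A \<subseteq> A \<inter> {w. \<forall>y\<in>Yn. bu y w \<in> A}"
      proof (rule A_min, unfold AF_def, intro CollectI conjI allI impI)
        show "subspace (A \<inter> {w. \<forall>y\<in>Yn. bu y w \<in> A})"
          by (rule subspace_inter[OF A_sub subspace_right[OF A_sub]])
        show "I \<subseteq> A \<inter> {w. \<forall>y\<in>Yn. bu y w \<in> A}"
          using IA I_ideal unfolding Yn_def by blast
        show "x0 \<in> A \<inter> {w. \<forall>y\<in>Yn. bu y w \<in> A}"
          using x0A hyp IA unfolding Yn_def by blast
        fix s j w assume j: "0 \<le> j" and s: "s \<in> S" and sG: "s \<in> Gr j" and w: "w \<in> A \<inter> {w. \<forall>y\<in>Yn. bu y w \<in> A}"
        have "bu y (bu s w) \<in> A" if y: "y \<in> Yn" for y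
        proof -
          obtain i where i: "i < 0" and yS: "y \<in> S" and yG: "y \<in> Gr i" using y unfolding Yn_def by blast
          have "bu y (bu s w) = bu (bu y s) w + psign (i * j) (bu s (bu y w))"
            by (rule jacobi[OF yG sG])
          moreover have "bu (bu y s) w \<in> A"
          proof (cases "0 \<le> i + j")
            case True
            then show ?thesis using A_c[OF True S_closed[OF yS s] bu_Gr[OF yG sG]] w by blast
          next
            case False
            then have "i + j < 0" by simp
            then have "bu y s \<in> Yn" unfolding Yn_def using S_closed[OF yS s] bu_Gr[OF yG sG] by blast
            then show ?thesis using w by blast
          qed
          moreover have "bu s (bu y w) \<in> A" using A_c[OF j s sG] w y by blast
          ultimately show ?thesis using A_sub psign_sub subspace_add by metis
        qed
        then show "bu s w \<in> A \<inter> {w. \<forall>y\<in>Yn. bu y w \<in> A}" using A_c[OF j s sG] w by blast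
      qed
      then show "\<And>y i w. i < 0 \<Longrightarrow> y \<in> S \<Longrightarrow> y \<in> Gr i \<Longrightarrow> w \<in> A \<Longrightarrow> bu y w \<in> A"
        unfolding Yn_def by blast
    qed
    have A_ideal: "\<forall>s\<in>S. \<forall>a\<in>A. bu s a \<in> A"
    proof -
      have "S \<subseteq> span {x. (\<exists>k. x \<in> Gr k) \<and> x \<in> S}" by (rule S_hom)
      also have "\<dots> \<subseteq> {s. \<forall>a\<in>A. bu s a \<in> A}"
      proof (rule span_minimal[OF _ subspace_left[OF A_sub]], rule subsetI)
        fix s assume "s \<in> {x. (\<exists>k. x \<in> Gr k) \<and> x \<in> S}"
        then obtain k where sG: "s \<in> Gr k" and s: "s \<in> S" by blast
        show "s \<in> {s. \<forall>a\<in>A. bu s a \<in> A}"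
        proof (cases "0 \<le> k")
          case True then show ?thesis using A_c[OF True s sG] by blast
        next
          case False then show ?thesis using A_neg[of k s] s sG by auto
        qed
      qed
      finally show ?thesis by blast
    qed
    have "A \<in> Fam" unfolding Fam_def graded_ideal_def graded_set_def
      using A_sub A_D D_S A_graded A_ideal cKI IA A_D D_CS by blast
    then have "A \<subseteq> I" by (rule FamI)
    then show "x0 \<in> I" using x0A by blast
  qed

  have sum_in: "x \<in> I" if allc: "\<And>k. comp x k \<in> I" for x
  proof -
    have "(\<Sum>k\<in>{k. comp x k \<noteq> 0}. comp x k) \<in> I" by (rule subspace_sum[OF I_sub]) (rule allc)
    then show ?thesis by (simp only: comp_sum_eq')
  qed
  have part1: "x \<in> I" if xS: "x \<in> S" and xd: "x \<in> deg_ge su Gr 2"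
    and hx: "\<forall>y\<in>S \<inter> deg_le su Gr (-1). bu y x \<in> I" for x
  proof (rule sum_in)
    fix k
    show "comp x k \<in> I"
    proof (cases "k < 2")
      case True
      then have "comp x k = 0" using xd deg_ge_iff by blast
      then show ?thesis using subspace_0[OF I_sub] by simp
    next
      case False
      note k = this
      have ckS: "comp x k \<in> S" using S_comp[OF xS] .
      show ?thesis
      proof (cases "k = 2")
        case True
        define x2 where "x2 = comp x 2"
        have x2G: "x2 \<in> Gr 2" unfolding x2_def by (rule comp_Gr)
        have Rx2: "bu r x2 = 0" if r: "r \<in> R" for r
        proof -
          have rG: "r \<in> Gr (-1)" using r RG by blast
          have "r \<in> S \<inter> deg_le su Gr (-1)" using r S_gens Gr_deg_le[OF rG] by blast
          then have "bu r x \<in> I" using hx by blast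
          then have "bu r x \<in> deg_ge su Gr 2" using I_deg by blast
          then have "comp (bu r x) 1 = 0" using deg_ge_iff by auto
          moreover have "comp (bu r x) 1 = bu r (comp x 2)" using comp_bu[OF rG, of x 1] by simp
          ultimately show ?thesis unfolding x2_def by simp
        qed
        define WF where "WF = {W. subspace W \<and> x2 \<in> W \<and> (\<forall>g\<in>Gr 0. \<forall>w\<in>W. bu g w \<in> W)}"
        define W2 where "W2 = \<Inter>WF"
        have W2_sub: "subspace W2" unfolding W2_def WF_def by (rule subspace_Inter) blast
        have x2W: "x2 \<in> W2" unfolding W2_def WF_def by blast
        have W2_c: "\<And>g w. g \<in> Gr 0 \<Longrightarrow> w \<in> W2 \<Longrightarrow> bu g w \<in> W2" unfolding W2_def WF_def by blast
        have W2_T: "W2 \<subseteq> Gr 2 \<inter> {w. \<forall>r\<in>R. bu r w \<in> {0}}"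
        proof -
          have "Gr 2 \<inter> {w. \<forall>r\<in>R. bu r w \<in> {0}} \<in> WF"
            unfolding WF_def
          proof (intro CollectI conjI ballI)
            show "subspace (Gr 2 \<inter> {w. \<forall>r\<in>R. bu r w \<in> {0}})"
              by (rule subspace_inter[OF Gr_sub subspace_right]) simp
            show "x2 \<in> Gr 2 \<inter> {w. \<forall>r\<in>R. bu r w \<in> {0}}" using x2G Rx2 by blast
            fix g w assume g: "g \<in> Gr 0" and w: "w \<in> Gr 2 \<inter> {w. \<forall>r\<in>R. bu r w \<in> {0}}"
            have "bu g w \<in> Gr 2" using bu_Gr[OF g, of w 2] w by simp
            moreover have "bu r (bu g w) = 0" if r: "r \<in> R" for r
            proof -
              have rG: "r \<in> Gr (-1)" using r RG by blast
              have "bu r (bu g w) = bu (bu r g) w + psign ((-1) * 0) (bu g (bu r w))"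
                by (rule jacobi[OF rG g])
              moreover have "bu (bu r g) w = 0" using w R_swap[OF r g] by blast
              moreover have "bu r w = 0" using w r by blast
              ultimately show ?thesis by (simp add: psign_def)
            qed
            ultimately show "bu g w \<in> Gr 2 \<inter> {w. \<forall>r\<in>R. bu r w \<in> {0}}" by blast
          qed
          then show ?thesis unfolding W2_def by blast
        qed
        have "W2 \<in> KF" unfolding KF_def
        proof (intro CollectI conjI ballI)
          show "subspace W2" by (rule W2_sub)
          show "W2 \<subseteq> Gr 2" using W2_T by blast
          show "bu g w \<in> W2" if "g \<in> Gr 0" "w \<in> W2" for g w using W2_c that by blast
          fix w assume w: "w \<in> W2"
          then have w2: "w \<in> Gr 2" and "bu th w = 0" using W2_T thR by blast+
          then show "\<sigma> w = 0" using sig_th[OF w2] by simp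
        qed
        then have "W2 \<subseteq> K" unfolding K_def' using span_superset[of "\<Union>KF"] by blast
        then have "x2 \<in> I" using x2W KcK cKI by blast
        then show ?thesis using True unfolding x2_def by simp
      next
        case False
        then have k3: "k \<ge> 3" using k by simp
        show ?thesis
        proof (rule key[OF ckS comp_Gr k3])
          fix y j assume j: "j < 0" and yS: "y \<in> S" and yG: "y \<in> Gr j"
          have "y \<in> S \<inter> deg_le su Gr (-1)" using yS Gr_deg_le[OF yG] j by simp
          then have "bu y x \<in> I" using hx by blast
          then have "comp (bu y x) (k + j) \<in> I" by (rule I_comp)
          then show "bu y (comp x k) \<in> I" using comp_bu[OF yG, of x "k + j"] by simp
        qed
      qed
    qed
  qed
  have part2: "x \<in> I" if xd: "x \<in> deg_le su Gr (-2)"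
    and hx: "\<forall>y\<in>S \<inter> deg_ge su Gr 1. bu y x \<in> I" for x
  proof -
    have "comp x k = 0" for k
    proof (cases "k \<le> -2")
      case False
      then show ?thesis using xd deg_le_iff by auto
    next
      case True
      define p where "p = - k"
      have p1: "p \<ge> 1" using True unfolding p_def by simp
      have kp: "k = - p" unfolding p_def by simp
      have ck: "comp x k \<in> Gr (-p)" using comp_Gr[of x k] kp by simp
      have zero: "bu (comp x k) (i1 u) = 0" for u
      proof -
        have uG: "i1 u \<in> Gr 1" using rng1 by blast
        have "i1 u \<in> S \<inter> deg_ge su Gr 1" using uG S_gens Gr_deg_ge[OF uG] by blast
        then have "bu (i1 u) x \<in> I" using hx by blast
        then have "bu (i1 u) x \<in> deg_ge su Gr 2" using I_deg by blast
        then have "comp (bu (i1 u) x) (k + 1) = 0" using deg_ge_iff True by auto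
        moreover have "comp (bu (i1 u) x) (k + 1) = bu (i1 u) (comp x k)" using comp_bu[OF uG, of x "k + 1"] by simp
        ultimately have "bu (i1 u) (comp x k) = 0" by simp
        moreover have "bu (comp x k) (i1 u) = - psign (k * 1) (bu (i1 u) (comp x k))"
          by (rule bu_anti[OF comp_Gr uG])
        ultimately show ?thesis by simp
      qed
      have inj: "inj_on (\<lambda>x u. bu x (i1 u)) (Gr (-p))" using bij[OF p1] by (rule bij_betw_imp_inj_on)
      have "(\<lambda>u. bu (comp x k) (i1 u)) = (\<lambda>u. bu 0 (i1 u))" using zero by simp
      then show ?thesis using inj_onD[OF inj _ ck G0[of "-p"]] by simp
    qed
    then have "x = 0" by (rule all_comp_zero)
    then show ?thesis using subspace_0[OF I_sub] by simp
  qed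
  show ?thesis
    unfolding quot_transitive_def S_def[symmetric] I_def[symmetric]
    using part1 part2 by blast
qed

end
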